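(* For all $t\in\mathbb N$ and $k\in\mathbb Z$ the sets $A_t(k)$, $B_t(k)$ and $C_t(k)$ are finite unions of arithmetic progressions. Their densities $a_t(k)$, $b_t(k)$ satisfy, for all $t\in\mathbb N$, $k\in\mathbb Z$: \begin{align*} a_{4t}(k)&=\tfrac12\bigl(a_{2t}(k)+b_{2t}(k)\bigr), & b_{4t}(k)&=\tfrac12\bigl(a_{2t}(k)+b_{2t}(k)\bigr),\\ a_{4t+1}(k)&=\tfrac12\bigl(a_{2t}(k)+b_{2t}(k-1)\bigr), & b_{4t+1}(k)&=\tfrac12\bigl(a_{2t+1}(k)+b_{2t+1}(k+1)\bigr),\\ a_{4t+2}(k)&=\tfrac12\bigl(a_{2t+1}(k)+b_{2t+1}(k)\bigr), & b_{4t+2}(k)&=\tfrac12\bigl(a_{2t+1}(k-1)+b_{2t+1}(k+1)\bigr),\\ a_{4t+3}(k)&=\tfrac12\bigl(a_{2t+1}(k-1)+b_{2t+1}(k)\bigr), & b_{4t+3}(k)&=\tfrac12\bigl(a_{2t+2}(k)+b_{2t+2}(k+1)\bigr), \end{align*} with initial conditions $a_0(k)=b_0(k)=1$ if $k=0$ and $0$ otherwise; $a_1(k)=\frac12$ if $k\in\{0,1\}$ and $0$ otherwise; $b_1(k)=0$ for $k>1$, $b_1(1)=\frac14$, and $b_1(k)=3\cdot 2^{k-3}$ for $k<1$.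
   Context: For $n\in\mathbb N=\{0,1,2,\dots\}$ with binary digits $\delta_j(n)$, let $\mathsf r(n)=\#\{j\ge0:\delta_{j+1}(n)=\delta_j(n)=1\}$ (number of occurrences of $\mathtt{11}$ in binary), and $d(t,n)=\mathsf r(n+t)-\mathsf r(n)$. For $t\in\mathbb N$, $k\in\mathbb Z$ define $A_t(k)=\{n\in\mathbb N:d(t,2n)=k\}$, $B_t(k)=\{n\in\mathbb N:d(t,2n+1)=k\}$, $C_t(k)=\{n\in\mathbb N:d(t,n)=k\}$, and let $a_t(k)$, $b_t(k)$ denote the asymptotic densities of $A_t(k)$, $B_t(k)$. *)

theory Defs
  imports Complex_Main
begin

definition r11 :: "nat \<Rightarrow> nat" where
  "r11 n = card {j. bit n (Suc j) \<and> bit n j}"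

definition dd :: "nat \<Rightarrow> nat \<Rightarrow> int" where
  "dd t n = int (r11 (n + t)) - int (r11 n)"

definition Aset :: "nat \<Rightarrow> int \<Rightarrow> nat set" where
  "Aset t k = {n. dd t (2 * n) = k}"

definition Bset :: "nat \<Rightarrow> int \<Rightarrow> nat set" where
  "Bset t k = {n. dd t (2 * n + 1) = k}"

definition Cset :: "nat \<Rightarrow> int \<Rightarrow> nat set" where
  "Cset t k = {n. dd t n = k}"

definition is_arith_prog :: "nat set \<Rightarrow> bool" where
  "is_arith_prog S \<longleftrightarrow> (\<exists>a q. q > 0 \<and> S = {a + q * m | m. True})"

definition finite_union_of_APs :: "nat set \<Rightarrow> bool" where
  "finite_union_of_APs S \<longleftrightarrow>
     (\<exists>F. finite F \<and> (\<forall>P\<in>F. is_arith_prog P) \<and> S = \<Union>F)"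

definition has_density :: "nat set \<Rightarrow> real \<Rightarrow> bool" where
  "has_density S x \<longleftrightarrow> (\<lambda>N. real (card (S \<inter> {..<N})) / real N) \<longlonglongrightarrow> x"

definition density :: "nat set \<Rightarrow> real" where
  "density S = lim (\<lambda>N. real (card (S \<inter> {..<N})) / real N)"

definition dens_a :: "nat \<Rightarrow> int \<Rightarrow> real" where
  "dens_a t k = density (Aset t k)"

definition dens_b :: "nat \<Rightarrow> int \<Rightarrow> real" where
  "dens_b t k = density (Bset t k)"

end

theory Submission
  imports Defs "HOL-Real_Asymp.Real_Asymp"
begin


lemma bit_fin: "finite {j. bit (n::nat) (Suc j) \<and> bit n j}"
proof (rule finite_subset[of _ "{..<n}"])
  show "{j. bit n (Suc j) \<and> bit n j} \<subseteq> {..<n}"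
  proof
    fix j assume "j \<in> {j. bit n (Suc j) \<and> bit n j}"
    hence b: "bit n j" by auto
    show "j \<in> {..<n}"
    proof (rule ccontr)
      assume "j \<notin> {..<n}"
      hence "n \<le> j" by auto
      hence "n < 2^j" using less_exp[of n] by (meson less_le_trans one_less_numeral_iff power_increasing_iff semiring_norm(76))
      hence "n div 2^j = 0" by simp
      thus False using b by (simp add: bit_iff_odd)
    qed
  qed
qed auto

lemma bit2: "bit (2*n::nat) (Suc j) = bit n j" "\<not> bit (2*n::nat) 0"
  "bit (2*n+1::nat) (Suc j) = bit n j" "bit (2*n+1::nat) 0"
  "bit (Suc (2*n)::nat) (Suc j) = bit n j" "bit (Suc (2*n)::nat) 0"
  by (auto simp: bit_Suc bit_0)

lemma r11_even: "r11 (2*n) = r11 n"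
proof -
  have "{j. bit (2*n) (Suc j) \<and> bit (2*n) j} = Suc ` {j. bit n (Suc j) \<and> bit n j}"
  proof (intro set_eqI iffI)
    fix x assume "x \<in> {j. bit (2*n) (Suc j) \<and> bit (2*n) j}"
    then show "x \<in> Suc ` {j. bit n (Suc j) \<and> bit n j}"
      by (cases x) (auto simp: bit2)
  next
    fix x assume "x \<in> Suc ` {j. bit n (Suc j) \<and> bit n j}"
    then show "x \<in> {j. bit (2*n) (Suc j) \<and> bit (2*n) j}" by (auto simp: bit2)
  qed
  thus ?thesis unfolding r11_def by (simp add: card_image)
qed

lemma r11_odd: "r11 (2*n+1) = r11 n + (if odd n then 1 else 0)"
proof -
  have "{j. bit (2*n+1) (Suc j) \<and> bit (2*n+1) j} = (if odd n then {0} else {}) \<union> Suc ` {j. bit n (Suc j) \<and> bit n j}"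
  proof (intro set_eqI iffI)
    fix x assume "x \<in> {j. bit (2*n+1) (Suc j) \<and> bit (2*n+1) j}"
    then show "x \<in> (if odd n then {0} else {}) \<union> Suc ` {j. bit n (Suc j) \<and> bit n j}"
      by (cases x) (auto simp: bit2 bit_0)
  next
    fix x assume "x \<in> (if odd n then {0} else {}) \<union> Suc ` {j. bit n (Suc j) \<and> bit n j}"
    then show "x \<in> {j. bit (2*n+1) (Suc j) \<and> bit (2*n+1) j}" by (auto simp: bit2 bit_0 split: if_splits)
  qed
  moreover have "card ((if odd n then {0} else {}) \<union> Suc ` {j. bit n (Suc j) \<and> bit n j})
     = (if odd n then 1 else 0) + card {j. bit n (Suc j) \<and> bit n j}"
    using bit_fin[of n] by (auto simp: card_image)
  ultimately show ?thesis unfolding r11_def by simp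
qed

definition ind :: "bool \<Rightarrow> int" where "ind b = (if b then 1 else 0)"

lemma L1: "dd (2*s) (2*n) = dd s n"
proof -
  have "2*n + 2*s = 2*(n+s)" by simp
  thus ?thesis unfolding dd_def by (simp only: r11_even)
qed

lemma L2: "dd (2*s) (2*n+1) = dd s n + ind (odd (n+s)) - ind (odd n)"
proof -
  have "2*n + 1 + 2*s = 2*(n+s)+1" by simp
  thus ?thesis unfolding dd_def ind_def by (simp only: r11_odd) auto
qed

lemma L3: "dd (2*s+1) (2*n) = dd s n + ind (odd (n+s))"
proof -
  have "2*n + (2*s+1) = 2*(n+s)+1" by simp
  thus ?thesis unfolding dd_def ind_def by (simp only: r11_odd r11_even) auto
qed

lemma L4: "dd (2*s+1) (2*n+1) = dd (s+1) n - ind (odd n)"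
proof -
  have "2*n + 1 + (2*s+1) = 2*(n+(s+1))" by simp
  thus ?thesis unfolding dd_def ind_def by (simp only: r11_odd r11_even) auto
qed

definition SS :: "nat set \<Rightarrow> nat set \<Rightarrow> nat set" where
  "SS X Y = {n. if even n then n div 2 \<in> X else n div 2 \<in> Y}"

lemma SS_split: "{n. P n} = SS {m. P (2*m)} {m. P (2*m+1)}"
  unfolding SS_def by (auto elim!: evenE oddE)

lemma C_SS: "Cset s k = SS (Aset s k) (Bset s k)"
  unfolding Cset_def Aset_def Bset_def by (rule SS_split)

lemma I1: "Aset (4*t) k = SS (Aset (2*t) k) (Bset (2*t) k)"
proof -
  have "Aset (4*t) k = {n. dd (2*t) n = k}" unfolding Aset_def using L1[of "2*t"] by simp
  thus ?thesis by (simp add: C_SS[unfolded Cset_def])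
qed

lemma I2: "Bset (4*t) k = SS (Aset (2*t) k) (Bset (2*t) k)"
proof -
  have "Bset (4*t) k = {n. dd (2*t) n = k}" unfolding Bset_def using L2[of "2*t"] by (simp add: ind_def)
  thus ?thesis by (simp add: C_SS[unfolded Cset_def])
qed

lemma I3: "Aset (4*t+1) k = SS (Aset (2*t) k) (Bset (2*t) (k-1))"
proof -
  have "Aset (4*t+1) k = {n. dd (2*t) n + ind (odd n) = k}" unfolding Aset_def using L3[of "2*t"] by simp
  also have "... = SS (Aset (2*t) k) (Bset (2*t) (k-1))"
    by (subst SS_split, rule arg_cong2[where f=SS]) (auto simp: Aset_def Bset_def ind_def)
  finally show ?thesis .
qed

lemma I4: "Bset (4*t+1) k = SS (Aset (2*t+1) k) (Bset (2*t+1) (k+1))"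
proof -
  have "Bset (4*t+1) k = {n. dd (2*t+1) n - ind (odd n) = k}" unfolding Bset_def using L4[of "2*t"] by simp
  also have "... = SS (Aset (2*t+1) k) (Bset (2*t+1) (k+1))"
    by (subst SS_split, rule arg_cong2[where f=SS]) (auto simp: Aset_def Bset_def ind_def)
  finally show ?thesis .
qed

lemma I5: "Aset (4*t+2) k = SS (Aset (2*t+1) k) (Bset (2*t+1) k)"
proof -
  have "Aset (4*t+2) k = {n. dd (2*t+1) n = k}" unfolding Aset_def using L1[of "2*t+1"] by simp
  thus ?thesis by (simp add: C_SS[unfolded Cset_def])
qed

lemma I6: "Bset (4*t+2) k = SS (Aset (2*t+1) (k-1)) (Bset (2*t+1) (k+1))"
proof -
  have "Bset (4*t+2) k = {n. dd (2*t+1) n + ind (even n) - ind (odd n) = k}" unfolding Bset_def using L2[of "2*t+1"] by simp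
  also have "... = SS (Aset (2*t+1) (k-1)) (Bset (2*t+1) (k+1))"
    by (subst SS_split, rule arg_cong2[where f=SS]) (auto simp: Aset_def Bset_def ind_def)
  finally show ?thesis .
qed

lemma I7: "Aset (4*t+3) k = SS (Aset (2*t+1) (k-1)) (Bset (2*t+1) k)"
proof -
  have e: "4*t+3 = 2*(2*t+1)+1" by simp
  have "Aset (4*t+3) k = {n. dd (2*t+1) n + ind (even n) = k}" unfolding Aset_def e using L3[of "2*t+1"] by simp
  also have "... = SS (Aset (2*t+1) (k-1)) (Bset (2*t+1) k)"
    by (subst SS_split, rule arg_cong2[where f=SS]) (auto simp: Aset_def Bset_def ind_def)
  finally show ?thesis .
qed

lemma I8: "Bset (4*t+3) k = SS (Aset (2*t+2) k) (Bset (2*t+2) (k+1))"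
proof -
  have e: "4*t+3 = 2*(2*t+1)+1" by simp
  have "Bset (4*t+3) k = {n. dd (2*t+2) n - ind (odd n) = k}" unfolding Bset_def e using L4[of "2*t+1"] by simp
  also have "... = SS (Aset (2*t+2) k) (Bset (2*t+2) (k+1))"
    by (subst SS_split, rule arg_cong2[where f=SS]) (auto simp: Aset_def Bset_def ind_def)
  finally show ?thesis .
qed



lemma SS_img: "SS X Y = (\<lambda>x. 2*x) ` X \<union> (\<lambda>y. 2*y+1) ` Y"
proof (intro set_eqI iffI)
  fix x assume a: "x \<in> SS X Y"
  show "x \<in> (\<lambda>x. 2*x) ` X \<union> (\<lambda>y. 2*y+1) ` Y"
  proof (cases "even x")
    case True
    hence "x = 2*(x div 2)" by simp
    moreover have "x div 2 \<in> X" using a True unfolding SS_def by simp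
    ultimately show ?thesis by blast
  next
    case False
    hence "x = 2*(x div 2)+1" by simp
    moreover have "x div 2 \<in> Y" using a False unfolding SS_def by simp
    ultimately show ?thesis by blast
  qed
next
  fix x assume "x \<in> (\<lambda>x. 2*x) ` X \<union> (\<lambda>y. 2*y+1) ` Y"
  then show "x \<in> SS X Y" unfolding SS_def by auto
qed

lemma AP_img: "is_arith_prog P \<Longrightarrow> is_arith_prog ((\<lambda>x. c*x+e) ` P)" if "c > 0" for c e :: nat
proof -
  assume "is_arith_prog P"
  then obtain a q where q: "q > 0" "P = {a + q * m | m. True}" unfolding is_arith_prog_def by blast
  have "(\<lambda>x. c*x+e) ` P = {(c*a+e) + (c*q) * m | m. True}"
  proof (intro set_eqI iffI)
    fix x assume "x \<in> (\<lambda>x. c*x+e) ` P" then show "x \<in> {(c*a+e) + (c*q) * m | m. True}"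
      unfolding q by (auto simp: algebra_simps)
  next
    fix x assume "x \<in> {(c*a+e) + (c*q) * m | m. True}"
    then obtain m where m: "x = (c*a+e) + (c*q) * m" by blast
    show "x \<in> (\<lambda>x. c*x+e) ` P"
      by (rule image_eqI[where x="a+q*m"]) (auto simp: m q algebra_simps)
  qed
  moreover have "c*q > 0" using q that by simp
  ultimately show ?thesis unfolding is_arith_prog_def by blast
qed

lemma fuap_img: "finite_union_of_APs X \<Longrightarrow> c > 0 \<Longrightarrow> finite_union_of_APs ((\<lambda>x. c*x+e) ` X)" for c e :: nat
proof -
  assume "finite_union_of_APs X" "c > 0"
  then obtain F where F: "finite F" "\<forall>P\<in>F. is_arith_prog P" "X = \<Union>F" unfolding finite_union_of_APs_def by blast
  show ?thesis unfolding finite_union_of_APs_def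
    apply (rule exI[of _ "image ((`) (\<lambda>x. c*x+e)) F"])
    using F AP_img[OF \<open>c > 0\<close>] by (auto simp: image_Union)
qed

lemma fuap_Un: "finite_union_of_APs X \<Longrightarrow> finite_union_of_APs Y \<Longrightarrow> finite_union_of_APs (X \<union> Y)"
proof -
  assume "finite_union_of_APs X" "finite_union_of_APs Y"
  then obtain F G where F: "finite F" "\<forall>P\<in>F. is_arith_prog P" "X = \<Union>F"
    and G: "finite G" "\<forall>P\<in>G. is_arith_prog P" "Y = \<Union>G" unfolding finite_union_of_APs_def by blast
  show ?thesis unfolding finite_union_of_APs_def
    apply (rule exI[of _ "F \<union> G"]) using F G by auto
qed

lemma fuap_SS: "finite_union_of_APs X \<Longrightarrow> finite_union_of_APs Y \<Longrightarrow> finite_union_of_APs (SS X Y)"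
  unfolding SS_img
  using fuap_img[of X 2 0] fuap_img[of Y 2 1] fuap_Un by simp

lemma card_SS: "card (SS X Y \<inter> {..<N}) = card (X \<inter> {..<(N+1) div 2}) + card (Y \<inter> {..<N div 2})"
proof -
  have "SS X Y \<inter> {..<N} = (\<lambda>x. 2*x) ` (X \<inter> {..<(N+1) div 2}) \<union> (\<lambda>y. 2*y+1) ` (Y \<inter> {..<N div 2})"
    unfolding SS_img by auto
  moreover have "card ((\<lambda>x. 2*x) ` (X \<inter> {..<(N+1) div 2}) \<union> (\<lambda>y. 2*y+1) ` (Y \<inter> {..<N div 2}))
     = card ((\<lambda>x. 2*x) ` (X \<inter> {..<(N+1) div 2})) + card ((\<lambda>y. 2*y+1) ` (Y \<inter> {..<N div 2}))"
    by (rule card_Un_disjoint) (auto, presburger)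
  moreover have "card ((\<lambda>x. 2*x) ` (X \<inter> {..<(N+1) div 2})) = card (X \<inter> {..<(N+1) div 2})"
    by (rule card_image) (auto simp: inj_on_def)
  moreover have "card ((\<lambda>y. 2*y+1) ` (Y \<inter> {..<N div 2})) = card (Y \<inter> {..<N div 2})"
    by (rule card_image) (auto simp: inj_on_def)
  ultimately show ?thesis by simp
qed



lemma lim_h: "(\<lambda>N. real ((N+1) div 2) / real N) \<longlonglongrightarrow> 1/2"
proof (rule tendsto_sandwich[of "\<lambda>N. 1/2" _ _ "\<lambda>N. (real N + 1)/(2*real N)"])
  show "\<forall>\<^sub>F N in sequentially. 1/2 \<le> real ((N+1) div 2) / real N"
    unfolding eventually_sequentially
  proof (intro exI[of _ 1] allI impI)
    fix N :: nat assume "1 \<le> N"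
    have "N \<le> 2*((N+1) div 2)" by presburger
    hence "real N \<le> 2*real ((N+1) div 2)" by linarith
    thus "1/2 \<le> real ((N+1) div 2) / real N" using \<open>1 \<le> N\<close> by (simp add: field_simps)
  qed
  show "\<forall>\<^sub>F N in sequentially. real ((N+1) div 2) / real N \<le> (real N + 1)/(2*real N)"
    unfolding eventually_sequentially
  proof (intro exI[of _ 1] allI impI)
    fix N :: nat assume "1 \<le> N"
    have "2*((N+1) div 2) \<le> N + 1" by presburger
    hence "2*real ((N+1) div 2) \<le> real N + 1" by linarith
    thus "real ((N+1) div 2) / real N \<le> (real N + 1)/(2*real N)" using \<open>1 \<le> N\<close> by (simp add: field_simps)
  qed
  show "(\<lambda>N. (real N + 1)/(2*real N)) \<longlonglongrightarrow> 1/2" by real_asymp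
qed simp

lemma lim_g: "(\<lambda>N. real (N div 2) / real N) \<longlonglongrightarrow> 1/2"
proof (rule tendsto_sandwich[of "\<lambda>N. (real N - 1)/(2*real N)" _ _ "\<lambda>N. 1/2"])
  show "\<forall>\<^sub>F N in sequentially. (real N - 1)/(2*real N) \<le> real (N div 2) / real N"
    unfolding eventually_sequentially
  proof (intro exI[of _ 1] allI impI)
    fix N :: nat assume "1 \<le> N"
    have "N \<le> 2*(N div 2) + 1" by presburger
    hence "real N \<le> real (2*(N div 2) + 1)" by (simp only: of_nat_le_iff)
    hence "real N \<le> 2*real (N div 2) + 1" by (simp only: of_nat_add of_nat_mult of_nat_1 of_nat_numeral)
    moreover have "\<And>a b::real. a \<le> 2*b+1 \<Longrightarrow> (a-1)/2 \<le> b" by simp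
    ultimately have "(real N - 1)/2 \<le> real (N div 2)" by blast
    hence "((real N - 1)/2) / real N \<le> real (N div 2) / real N" by (rule divide_right_mono) simp
    thus "(real N - 1)/(2*real N) \<le> real (N div 2) / real N" by simp
  qed
  show "\<forall>\<^sub>F N in sequentially. real (N div 2) / real N \<le> 1/2"
    unfolding eventually_sequentially
  proof (intro exI[of _ 1] allI impI)
    fix N :: nat assume "1 \<le> N"
    have "2*(N div 2) \<le> N" by presburger
    hence "2*real (N div 2) \<le> real N" by linarith
    thus "real (N div 2) / real N \<le> 1/2" using \<open>1 \<le> N\<close> by (simp add: field_simps)
  qed
  show "(\<lambda>N. (real N - 1)/(2*real N)) \<longlonglongrightarrow> 1/2" by real_asymp
qed simp

lemma filterlim_div2: "filterlim (\<lambda>N::nat. (N + c) div 2) at_top sequentially"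
  unfolding filterlim_at_top eventually_sequentially
proof
  fix Z :: nat
  show "\<exists>N. \<forall>n\<ge>N. Z \<le> (n + c) div 2"
  proof (intro exI[of _ "2*Z"] allI impI)
    fix n assume "2*Z \<le> n" thus "Z \<le> (n + c) div 2" by presburger
  qed
qed

lemma comp_lim:
  assumes f: "(\<lambda>N. real (card (X \<inter> {..<N})) / real N) \<longlonglongrightarrow> x"
    and h: "(\<lambda>N. real (h N) / real N) \<longlonglongrightarrow> 1/2"
    and hl: "filterlim h at_top sequentially"
  shows "(\<lambda>N. real (card (X \<inter> {..<h N})) / real N) \<longlonglongrightarrow> x/2"
proof -
  have c: "(\<lambda>N. real (card (X \<inter> {..<h N})) / real (h N)) \<longlonglongrightarrow> x"
    using filterlim_compose[OF f hl] by simp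
  have "(\<lambda>N. real (card (X \<inter> {..<h N})) / real (h N) * (real (h N) / real N)) \<longlonglongrightarrow> x * (1/2)"
    by (rule tendsto_mult[OF c h])
  moreover have "(\<lambda>N. real (card (X \<inter> {..<h N})) / real (h N) * (real (h N) / real N))
      = (\<lambda>N. real (card (X \<inter> {..<h N})) / real N)"
  proof
    fix N show "real (card (X \<inter> {..<h N})) / real (h N) * (real (h N) / real N)
      = real (card (X \<inter> {..<h N})) / real N"
    by (cases "h N = 0") auto
  qed
  ultimately show ?thesis by simp
qed

lemma dens_SS:
  assumes "has_density X x" "has_density Y y"
  shows "has_density (SS X Y) ((x+y)/2)"
proof -
  have a: "(\<lambda>N. real (card (X \<inter> {..<(N+1) div 2})) / real N) \<longlonglongrightarrow> x/2"
    by (rule comp_lim[OF assms(1)[unfolded has_density_def] lim_h filterlim_div2])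
  have b: "(\<lambda>N. real (card (Y \<inter> {..<(N+0) div 2})) / real N) \<longlonglongrightarrow> y/2"
    by (rule comp_lim[OF assms(2)[unfolded has_density_def] _ filterlim_div2]) (simp add: lim_g)
  have "(\<lambda>N. real (card (X \<inter> {..<(N+1) div 2})) / real N + real (card (Y \<inter> {..<(N+0) div 2})) / real N)
     \<longlonglongrightarrow> x/2 + y/2" by (rule tendsto_add[OF a b])
  thus ?thesis unfolding has_density_def card_SS by (simp add: add_divide_distrib)
qed

lemma density_eq: "has_density X x \<Longrightarrow> density X = x"
  unfolding has_density_def density_def by (rule limI)



definition Q :: "nat set \<Rightarrow> bool" where
  "Q X \<longleftrightarrow> finite_union_of_APs X \<and> (\<exists>x. has_density X x)"

lemma Q_SS: "Q X \<Longrightarrow> Q Y \<Longrightarrow> Q (SS X Y)"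
  unfolding Q_def using fuap_SS dens_SS by blast

lemma density_SS: "Q X \<Longrightarrow> Q Y \<Longrightarrow> density (SS X Y) = (density X + density Y)/2"
proof -
  assume "Q X" "Q Y"
  then obtain x y where "has_density X x" "has_density Y y" unfolding Q_def by blast
  thus ?thesis using dens_SS density_eq by metis
qed

lemma dens_UNIV: "has_density UNIV 1"
proof -
  have "\<forall>\<^sub>F N in sequentially. 1 = real (card (UNIV \<inter> {..<N})) / real N"
    unfolding eventually_sequentially by (rule exI[of _ 1]) auto
  thus ?thesis unfolding has_density_def by (rule Lim_transform_eventually[OF tendsto_const])
qed

lemma dens_empty: "has_density {} 0"
  unfolding has_density_def by simp

lemma Q_UNIV: "Q UNIV"
proof -
  have "is_arith_prog UNIV" unfolding is_arith_prog_def by (rule exI[of _ 0], rule exI[of _ 1]) auto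
  hence "finite_union_of_APs UNIV" unfolding finite_union_of_APs_def by (rule_tac exI[of _ "{UNIV}"]) auto
  thus ?thesis unfolding Q_def using dens_UNIV by blast
qed

lemma Q_empty: "Q {}"
proof -
  have "finite_union_of_APs {}" unfolding finite_union_of_APs_def by (rule exI[of _ "{}"]) auto
  thus ?thesis unfolding Q_def using dens_empty by blast
qed

lemma dd0: "dd 0 n = 0" unfolding dd_def by simp

lemma A0: "Aset 0 k = (if k = 0 then UNIV else {})" unfolding Aset_def by (simp add: dd0)
lemma B0: "Bset 0 k = (if k = 0 then UNIV else {})" unfolding Bset_def by (simp add: dd0)

lemma dd1_le: "dd 1 n \<le> 1"
proof (induction n rule: less_induct)
  case (less n)
  show ?case
  proof (cases "even n")
    case True
    then obtain m where m: "n = 2*m" by (elim evenE)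
    show ?thesis using L3[of 0 m] unfolding m by (simp add: dd0 ind_def)
  next
    case False
    then obtain m where m: "n = 2*m+1" by (elim oddE)
    have "m < n" using m by simp
    thus ?thesis using L4[of 0 m] less[of m] unfolding m by (simp add: ind_def)
  qed
qed

lemma B1_big: "k \<ge> 2 \<Longrightarrow> Bset 1 k = {}"
proof (rule equals0I)
  fix n assume "k \<ge> 2" "n \<in> Bset 1 k"
  hence "dd 1 (2*n+1) = k" unfolding Bset_def by simp
  thus False using dd1_le[of "2*n+1"] \<open>k \<ge> 2\<close> by linarith
qed

lemma I3_0: "Aset 1 k = SS (Aset 0 k) (Bset 0 (k-1))" using I3[of 0 k] by simp
lemma I4_0: "Bset 1 k = SS (Aset 1 k) (Bset 1 (k+1))" using I4[of 0 k] by simp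

lemma QA1: "Q (Aset 1 k)"
  unfolding I3_0 A0 B0 by (rule Q_SS) (auto simp: Q_UNIV Q_empty)

lemma QB1: "Q (Bset 1 k)"
proof -
  have jf: "Q (Bset 1 (2 - int j))" for j
  proof (induction j)
    case 0 thus ?case using B1_big[of 2] Q_empty by simp
  next
    case (Suc j)
    have "Bset 1 (2 - int (Suc j)) = SS (Aset 1 (2 - int (Suc j))) (Bset 1 (2 - int j))"
      using I4_0[of "2 - int (Suc j)"] by simp
    thus ?case using Suc QA1 Q_SS by simp
  qed
  show ?thesis
  proof (cases "k \<ge> 2")
    case True thus ?thesis using B1_big Q_empty by simp
  next
    case False
    hence e: "k = 2 - int (nat (2 - k))" by simp
    show ?thesis by (subst e) (rule jf)
  qed
qed


lemma QAB: "Q (Aset t k) \<and> Q (Bset t k)"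
proof (induction t arbitrary: k rule: less_induct)
  case (less t)
  show ?case
  proof (cases "t \<le> 1")
    case True
    then consider "t = 0" | "t = 1" by linarith
    thus ?thesis
    proof cases
      case 1 thus ?thesis by (simp add: A0 B0 Q_UNIV Q_empty)
    next
      case 2 thus ?thesis using QA1 QB1 by simp
    qed
  next
    case False
    define s where "s = t div 4"
    have ts: "t = 4*s + t mod 4" unfolding s_def by simp
    have "t mod 4 < 4" by simp
    then consider "t mod 4 = 0" | "t mod 4 = 1" | "t mod 4 = 2" | "t mod 4 = 3" by linarith
    thus ?thesis
    proof cases
      case 1
      hence t: "t = 4*s" using ts by simp
      have l: "2*s < t" using False t by simp
      have a: "\<And>j. Q (Aset (2*s) j)" and b: "\<And>j. Q (Bset (2*s) j)" using less.IH[OF l] by auto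
      show ?thesis unfolding t I1 I2 using a b Q_SS by simp
    next
      case 2
      hence t: "t = 4*s+1" using ts by simp
      have l: "2*s < t" "2*s+1 < t" using False t by simp_all
      have a: "\<And>j. Q (Aset (2*s) j)" and b: "\<And>j. Q (Bset (2*s) j)" using less.IH[OF l(1)] by auto
      have c: "\<And>j. Q (Aset (2*s+1) j)" and d: "\<And>j. Q (Bset (2*s+1) j)" using less.IH[OF l(2)] by auto
      show ?thesis unfolding t I3 I4 using a b c d Q_SS by simp
    next
      case 3
      hence t: "t = 4*s+2" using ts by simp
      have l: "2*s+1 < t" using False t by simp
      have c: "\<And>j. Q (Aset (2*s+1) j)" and d: "\<And>j. Q (Bset (2*s+1) j)" using less.IH[OF l] by auto
      show ?thesis unfolding t I5 I6 using c d Q_SS by simp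
    next
      case 4
      hence t: "t = 4*s+3" using ts by simp
      have l: "2*s+1 < t" "2*s+2 < t" using False t by simp_all
      have c: "\<And>j. Q (Aset (2*s+1) j)" and d: "\<And>j. Q (Bset (2*s+1) j)" using less.IH[OF l(1)] by auto
      have e: "\<And>j. Q (Aset (2*s+2) j)" and f: "\<And>j. Q (Bset (2*s+2) j)" using less.IH[OF l(2)] by auto
      show ?thesis unfolding t I7 I8 using c d e f Q_SS by simp
    qed
  qed
qed



lemma QA: "Q (Aset t k)" and QB: "Q (Bset t k)" using QAB by auto

lemma dA: "has_density (Aset t k) (dens_a t k)"
proof -
  obtain x where "has_density (Aset t k) x" using QA unfolding Q_def by blast
  thus ?thesis unfolding dens_a_def using density_eq by simp
qed

lemma dB: "has_density (Bset t k) (dens_b t k)"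
proof -
  obtain x where "has_density (Bset t k) x" using QB unfolding Q_def by blast
  thus ?thesis unfolding dens_b_def using density_eq by simp
qed

lemma dSS: "density (SS (Aset t k) (Bset t' k')) = (dens_a t k + dens_b t' k')/2"
  unfolding dens_a_def dens_b_def by (rule density_SS[OF QA QB])

lemma rec_a1: "dens_a 1 k = (dens_a 0 k + dens_b 0 (k-1))/2"
  using dSS[of 0 k 0 "k-1"] unfolding dens_a_def[of 1] I3_0 by simp

lemma rec_b1: "dens_b 1 k = (dens_a 1 k + dens_b 1 (k+1))/2"
  using dSS[of 1 k 1 "k+1"] unfolding dens_b_def[of 1 k] I4_0[of k] by simp

lemma da0: "dens_a 0 k = (if k = 0 then 1 else 0)"
  unfolding dens_a_def A0 using density_eq[OF dens_UNIV] density_eq[OF dens_empty] by simp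
lemma db0: "dens_b 0 k = (if k = 0 then 1 else 0)"
  unfolding dens_b_def B0 using density_eq[OF dens_UNIV] density_eq[OF dens_empty] by simp

lemma da1: "dens_a 1 k = (if k \<in> {0, 1} then 1/2 else 0)"
  unfolding rec_a1 da0 db0 by auto

lemma db1_big: "k > 1 \<Longrightarrow> dens_b 1 k = 0"
  unfolding dens_b_def using B1_big[of k] density_eq[OF dens_empty] by simp

lemma db1_1: "dens_b 1 1 = 1/4"
  using rec_b1[of 1] da1[of 1] db1_big[of 2] by simp

lemma db1_neg: "dens_b 1 (- int j) = 3 / 2^(j+3)"
proof (induction j)
  case 0
  thus ?case using rec_b1[of 0] da1[of 0] db1_1 by simp
next
  case (Suc j)
  have "dens_b 1 (- int (Suc j)) = (dens_a 1 (- int (Suc j)) + dens_b 1 (- int j))/2"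
    using rec_b1[of "- int (Suc j)"] by simp
  also have "... = dens_b 1 (- int j) / 2" using da1[of "- int (Suc j)"] by simp
  finally have "dens_b 1 (- int (Suc j)) = 3 / 2^(j+3) / 2" using Suc by simp
  moreover have "(2::real)^(Suc j+3) = 2^(j+3)*2" by (simp add: power_add)
  ultimately show ?case by simp
qed

lemma db1_lt: "k < 1 \<Longrightarrow> dens_b 1 k = 3 * 2 powr (real_of_int k - 3)"
proof -
  assume "k < 1"
  define j where "j = nat (- k)"
  have k: "k = - int j" unfolding j_def using \<open>k < 1\<close> by simp
  have "2 powr (real_of_int k - 3) = 1 / 2 powr (real (j+3))"
    unfolding k by (simp add: powr_minus_divide[symmetric] algebra_simps)
  also have "... = 1 / 2^(j+3)" using powr_realpow[of 2 "j+3"] by simp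
  finally show ?thesis unfolding k db1_neg by simp
qed

theorem proposition3p2:
  shows "(\<forall>t k. finite_union_of_APs (Aset t k) \<and> finite_union_of_APs (Bset t k)
                \<and> finite_union_of_APs (Cset t k))
     \<and> (\<forall>t k. has_density (Aset t k) (dens_a t k) \<and> has_density (Bset t k) (dens_b t k))
     \<and> (\<forall>(t::nat) (k::int).
          dens_a (4*t) k = (dens_a (2*t) k + dens_b (2*t) k) / 2
        \<and> dens_b (4*t) k = (dens_a (2*t) k + dens_b (2*t) k) / 2
        \<and> dens_a (4*t+1) k = (dens_a (2*t) k + dens_b (2*t) (k-1)) / 2
        \<and> dens_b (4*t+1) k = (dens_a (2*t+1) k + dens_b (2*t+1) (k+1)) / 2
        \<and> dens_a (4*t+2) k = (dens_a (2*t+1) k + dens_b (2*t+1) k) / 2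
        \<and> dens_b (4*t+2) k = (dens_a (2*t+1) (k-1) + dens_b (2*t+1) (k+1)) / 2
        \<and> dens_a (4*t+3) k = (dens_a (2*t+1) (k-1) + dens_b (2*t+1) k) / 2
        \<and> dens_b (4*t+3) k = (dens_a (2*t+2) k + dens_b (2*t+2) (k+1)) / 2)
     \<and> (\<forall>k::int. dens_a 0 k = (if k = 0 then 1 else 0) \<and> dens_b 0 k = (if k = 0 then 1 else 0))
     \<and> (\<forall>k::int. dens_a 1 k = (if k \<in> {0, 1} then 1/2 else 0))
     \<and> (\<forall>k::int. k > 1 \<longrightarrow> dens_b 1 k = 0)
     \<and> dens_b 1 1 = 1/4
     \<and> (\<forall>k::int. k < 1 \<longrightarrow> dens_b 1 k = 3 * 2 powr (real_of_int k - 3))"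
proof (intro conjI allI impI)
  fix t k
  show "finite_union_of_APs (Aset t k)" using QA unfolding Q_def by blast
  show "finite_union_of_APs (Bset t k)" using QB unfolding Q_def by blast
  show "finite_union_of_APs (Cset t k)" unfolding C_SS using QA QB fuap_SS unfolding Q_def by blast
  show "has_density (Aset t k) (dens_a t k)" by (rule dA)
  show "has_density (Bset t k) (dens_b t k)" by (rule dB)
next
  fix t :: nat and k :: int
  show "dens_a (4*t) k = (dens_a (2*t) k + dens_b (2*t) k) / 2"
    unfolding dens_a_def[of "4*t"] I1 by (rule dSS)
  show "dens_b (4*t) k = (dens_a (2*t) k + dens_b (2*t) k) / 2"
    unfolding dens_b_def[of "4*t"] I2 by (rule dSS)
  show "dens_a (4*t+1) k = (dens_a (2*t) k + dens_b (2*t) (k-1)) / 2"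
    unfolding dens_a_def[of "4*t+1"] I3 by (rule dSS)
  show "dens_b (4*t+1) k = (dens_a (2*t+1) k + dens_b (2*t+1) (k+1)) / 2"
    unfolding dens_b_def[of "4*t+1"] I4 by (rule dSS)
  show "dens_a (4*t+2) k = (dens_a (2*t+1) k + dens_b (2*t+1) k) / 2"
    unfolding dens_a_def[of "4*t+2"] I5 by (rule dSS)
  show "dens_b (4*t+2) k = (dens_a (2*t+1) (k-1) + dens_b (2*t+1) (k+1)) / 2"
    unfolding dens_b_def[of "4*t+2"] I6 by (rule dSS)
  show "dens_a (4*t+3) k = (dens_a (2*t+1) (k-1) + dens_b (2*t+1) k) / 2"
    unfolding dens_a_def[of "4*t+3"] I7 by (rule dSS)
  show "dens_b (4*t+3) k = (dens_a (2*t+2) k + dens_b (2*t+2) (k+1)) / 2"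
    unfolding dens_b_def[of "4*t+3"] I8 by (rule dSS)
next
  fix k :: int
  show "dens_a 0 k = (if k = 0 then 1 else 0)" by (rule da0)
  show "dens_b 0 k = (if k = 0 then 1 else 0)" by (rule db0)
  show "dens_a 1 k = (if k \<in> {0, 1} then 1/2 else 0)" by (rule da1)
next
  fix k :: int assume "k > 1" thus "dens_b 1 k = 0" by (rule db1_big)
next
  show "dens_b 1 1 = 1/4" by (rule db1_1)
next
  fix k :: int assume "k < 1" thus "dens_b 1 k = 3 * 2 powr (real_of_int k - 3)" by (rule db1_lt)
qed

end
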